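(* Let $m\in\mathbb{N}$ and $a,b\in\mathbb{R}_+$ be such that $a+(m-1)b/2>1$ and $ma>1$. Then \[ \int_{\mathbb{R}^m}\prod_{j=1}^m\frac{1}{1+|x_j|^a}\prod_{1\le i< j \le m}\frac{1}{1+|x_i-x_j|^b}\,\mathrm{d}x_1\cdots\mathrm{d}x_m<\infty. \]
   Context: $\mathbb{R}_+=[0,\infty)$. *)

theory Defs
  imports "HOL-Analysis.Analysis"
begin

end

theory Submission
  imports Defs
begin

definition fa :: "real \<Rightarrow> real \<Rightarrow> real" where
  "fa a t = 1 / (1 + \<bar>t\<bar> powr a)"

lemma onepowr_pos[simp]: "0 < 1 + x powr (a::real)"
  using powr_ge_zero[of x a] by linarith

lemma onepowr_not_neg[simp]: "\<not> 1 + x powr (a::real) < 0"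
  using powr_ge_zero[of x a] by linarith

lemma fa_pos: "fa a t > 0"
  unfolding fa_def by (simp add: add_pos_nonneg)

lemma fa_le1: "fa a t \<le> 1"
  unfolding fa_def using powr_ge_zero[of "\<bar>t\<bar>" a] by (simp add: divide_simps)

lemma fa_meas[measurable]: "(\<lambda>t. fa a t) \<in> borel_measurable borel"
  unfolding fa_def by measurable

lemma fa_int:
  assumes p: "p > 1"
  shows "(\<integral>\<^sup>+t. ennreal (fa p t) \<partial>lborel) < \<infinity>"
proof -
  have h1: "(\<integral>\<^sup>+t. ennreal (t powr -p) * indicator {1..} t \<partial>lborel) = ennreal (-(1 powr (-p+1)) / (-p+1))"
    by (rule nn_integral_has_integral_lebesgue'[OF _ has_integral_powr_to_inf]) (use p in auto)
  have h2: "(\<integral>\<^sup>+t. ennreal ((-t) powr -p) * indicator {..-1} t \<partial>lborel)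
      = (\<integral>\<^sup>+t. ennreal (t powr -p) * indicator {1..} t \<partial>lborel)"
    by (subst nn_integral_real_affine[where c="-1" and t=0]) (auto intro!: nn_integral_cong simp: indicator_def)
  have h3: "(\<integral>\<^sup>+t. indicator {-1..1::real} t \<partial>lborel) = 2"
    by (subst nn_integral_indicator) auto
  have "(\<integral>\<^sup>+t. ennreal (fa p t) \<partial>lborel) \<le> (\<integral>\<^sup>+t. ennreal (t powr -p) * indicator {1..} t
        + ennreal ((-t) powr -p) * indicator {..-1} t + indicator {-1..1} t \<partial>lborel)"
  proof (rule nn_integral_mono)
    fix t :: real
    consider "t > 1" | "t < -1" | "-1 \<le> t \<and> t \<le> 1" by linarith
    then show "ennreal (fa p t) \<le> ennreal (t powr -p) * indicator {1..} t
        + ennreal ((-t) powr -p) * indicator {..-1} t + indicator {-1..1} t"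
    proof cases
      case 1
      then have "fa p t \<le> t powr -p" unfolding fa_def using p
        by (simp add: powr_minus divide_simps)
      then show ?thesis using 1 by (simp add: indicator_def)
    next
      case 2
      then have "fa p t \<le> (-t) powr -p" unfolding fa_def using p
        by (simp add: powr_minus divide_simps)
      then show ?thesis using 2 by (simp add: indicator_def)
    next
      case 3
      then have "ennreal (fa p t) \<le> indicator {-1..1} t" using fa_le1[of p t] by (simp add: indicator_def)
      then show ?thesis by (intro add_increasing) auto
    qed
  qed
  also have "\<dots> = (\<integral>\<^sup>+t. ennreal (t powr -p) * indicator {1..} t \<partial>lborel)
        + (\<integral>\<^sup>+t. ennreal ((-t) powr -p) * indicator {..-1} t \<partial>lborel) + (\<integral>\<^sup>+t. indicator {-1..1::real} t \<partial>lborel)"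
    apply (subst nn_integral_add, measurable)
    apply (subst nn_integral_add, measurable)
    done
  also have "\<dots> < \<infinity>" unfolding h2 h1 h3 by simp
  finally show ?thesis .
qed

lemma fa_shift:
  fixes h :: "real \<Rightarrow> real" and c :: real
  assumes [measurable]: "h \<in> borel_measurable borel"
  shows "(\<integral>\<^sup>+t. ennreal (h (t - c)) \<partial>lborel) = (\<integral>\<^sup>+t. ennreal (h t) \<partial>lborel)"
  by (subst nn_integral_real_affine[where c=1 and t="-c" and f="\<lambda>t. ennreal (h t)"]) auto

lemma powr_combine_bound:
  fixes X Y :: real
  assumes "1 \<le> X" "Y \<le> X" "0 \<le> Y"
  shows "1 / X \<le> 2 * (1 / (1 + Y))"
  using assms by (simp add: field_simps)

lemma fa_powr:
  assumes "a \<ge> 0" "e \<ge> 0"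
  shows "fa a t powr e \<le> 2 * fa (a * e) t"
proof -
  have X1: "1 \<le> (1 + \<bar>t\<bar> powr a) powr e"
    using assms by (intro ge_one_powr_ge_zero) auto
  have "\<bar>t\<bar> powr (a * e) = (\<bar>t\<bar> powr a) powr e" by (simp add: powr_powr)
  also have "\<dots> \<le> (1 + \<bar>t\<bar> powr a) powr e"
    using assms by (intro powr_mono2) auto
  finally have X2: "\<bar>t\<bar> powr (a * e) \<le> (1 + \<bar>t\<bar> powr a) powr e" .
  have "fa a t powr e = 1 / (1 + \<bar>t\<bar> powr a) powr e"
    unfolding fa_def by (simp add: powr_divide)
  also have "\<dots> \<le> 2 * fa (a * e) t"
    unfolding fa_def by (rule powr_combine_bound[OF X1 X2]) simp
  finally show ?thesis .
qed

lemma fa_mix: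
  assumes "a \<ge> 0" "e \<ge> 0" "b \<ge> 0"
  shows "fa a t powr e * fa b t \<le> 2 * fa (a * e + b) t"
proof -
  have X1: "1 \<le> (1 + \<bar>t\<bar> powr a) powr e"
    using assms by (intro ge_one_powr_ge_zero) auto
  have "\<bar>t\<bar> powr (a * e) = (\<bar>t\<bar> powr a) powr e" by (simp add: powr_powr)
  also have "\<dots> \<le> (1 + \<bar>t\<bar> powr a) powr e"
    using assms by (intro powr_mono2) auto
  finally have X2: "\<bar>t\<bar> powr (a * e) \<le> (1 + \<bar>t\<bar> powr a) powr e" .
  have X3: "1 \<le> (1 + \<bar>t\<bar> powr a) powr e * (1 + \<bar>t\<bar> powr b)"
  proof -
    have "1 \<le> 1 + \<bar>t\<bar> powr b" by simp
    then have "1 * 1 \<le> (1 + \<bar>t\<bar> powr a) powr e * (1 + \<bar>t\<bar> powr b)"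
      using X1 by (intro mult_mono) auto
    then show ?thesis by simp
  qed
  have "\<bar>t\<bar> powr (a * e + b) = \<bar>t\<bar> powr (a * e) * \<bar>t\<bar> powr b" by (simp add: powr_add)
  also have "\<dots> \<le> (1 + \<bar>t\<bar> powr a) powr e * (1 + \<bar>t\<bar> powr b)"
    using X2 by (intro mult_mono) auto
  finally have X4: "\<bar>t\<bar> powr (a * e + b) \<le> (1 + \<bar>t\<bar> powr a) powr e * (1 + \<bar>t\<bar> powr b)" .
  have "fa a t powr e * fa b t = 1 / ((1 + \<bar>t\<bar> powr a) powr e * (1 + \<bar>t\<bar> powr b))"
    unfolding fa_def by (simp add: powr_divide)
  also have "\<dots> \<le> 2 * fa (a * e + b) t"
    unfolding fa_def by (rule powr_combine_bound[OF X3 X4]) simp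
  finally show ?thesis .
qed

lemma fa_mono:
  assumes "a \<ge> 0" "\<bar>s\<bar> \<le> \<bar>t\<bar>"
  shows "fa a t \<le> fa a s"
  unfolding fa_def using assms by (simp add: divide_simps powr_mono2)

lemma fa_sym: "fa a (u - v) = fa a (v - u)"
  unfolding fa_def by (simp add: abs_minus_commute)

lemma fa_tri:
  assumes "a \<ge> 0" "\<bar>y - c\<bar> \<le> \<bar>x - c\<bar>"
  shows "fa a (x - c) \<le> 2 powr a * fa a (x - y)"
proof -
  have "\<bar>x - y\<bar> \<le> 2 * \<bar>x - c\<bar>"
    using assms abs_triangle_ineq4[of "x - c" "y - c"] by simp
  then have "\<bar>x - y\<bar> powr a \<le> (2 * \<bar>x - c\<bar>) powr a"
    using assms by (intro powr_mono2) auto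
  also have "\<dots> = 2 powr a * \<bar>x - c\<bar> powr a" by (simp add: powr_mult)
  finally have h: "1 + \<bar>x - y\<bar> powr a \<le> 2 powr a * (1 + \<bar>x - c\<bar> powr a)"
    using assms ge_one_powr_ge_zero[of 2 a] by (simp add: algebra_simps)
  have "fa a (x - c) = 1 / (1 + \<bar>x - c\<bar> powr a)" by (simp add: fa_def)
  also have "\<dots> \<le> 2 powr a / (1 + \<bar>x - y\<bar> powr a)"
    using h by (simp add: divide_simps mult.commute)
  finally show ?thesis by (simp add: fa_def)
qed

definition pairs :: "nat set \<Rightarrow> (nat \<times> nat) set" where
  "pairs I = {(i, j). i \<in> I \<and> j \<in> I \<and> i < j}"

definition PP :: "nat set \<Rightarrow> real \<Rightarrow> real \<Rightarrow> real \<Rightarrow> (nat \<Rightarrow> real) \<Rightarrow> real" where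
  "PP I a b c x = (\<Prod>j\<in>I. fa a (x j - c)) * (\<Prod>p\<in>pairs I. fa b (x (fst p) - x (snd p)))"

lemma finite_pairs: "finite I \<Longrightarrow> finite (pairs I)"
  unfolding pairs_def by (rule finite_subset[of _ "I \<times> I"]) auto

lemma PP_nonneg: "0 \<le> PP I a b c x"
  unfolding PP_def by (intro mult_nonneg_nonneg prod_nonneg) (auto intro: less_imp_le fa_pos)

lemma PP_meas[measurable]:
  "(\<lambda>x. ennreal (PP I a b c x)) \<in> borel_measurable (PiM I (\<lambda>_. lborel))"
proof -
  have 1: "(\<lambda>x. \<Prod>j\<in>I. fa a (x j - c)) \<in> borel_measurable (PiM I (\<lambda>_. lborel))"
    by (rule borel_measurable_prod) measurable
  have 2: "(\<lambda>x. \<Prod>p\<in>pairs I. fa b (x (fst p) - x (snd p))) \<in> borel_measurable (PiM I (\<lambda>_. lborel))"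
  proof (rule borel_measurable_prod)
    fix p assume "p \<in> pairs I"
    then have [measurable]: "fst p \<in> I" "snd p \<in> I" unfolding pairs_def by auto
    show "(\<lambda>x. fa b (x (fst p) - x (snd p))) \<in> borel_measurable (PiM I (\<lambda>_. lborel))"
      by measurable
  qed
  show ?thesis unfolding PP_def using 1 2 by measurable
qed

lemma PP_upd: "k \<notin> J \<Longrightarrow> PP J a b c (x(k := t)) = PP J a b c x"
  unfolding PP_def pairs_def
  by (intro arg_cong2[where f="(*)"] prod.cong) auto

lemma pairs_insert:
  assumes "k \<notin> J"
  shows "pairs (insert k J) = pairs J \<union> (\<lambda>j. (min j k, max j k)) ` J"
proof (intro set_eqI iffI)
  fix p assume "p \<in> pairs (insert k J)"
  then obtain i j where p: "p = (i, j)" "i \<in> insert k J" "j \<in> insert k J" "i < j"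
    unfolding pairs_def by auto
  show "p \<in> pairs J \<union> (\<lambda>j. (min j k, max j k)) ` J"
  proof (cases "i = k")
    case True
    then have "p = (min j k, max j k)" "j \<in> J" using p by auto
    then show ?thesis by blast
  next
    case False
    show ?thesis
    proof (cases "j = k")
      case True
      then have "p = (min i k, max i k)" "i \<in> J" using p False by auto
      then show ?thesis by blast
    next
      case False
      then show ?thesis using p \<open>i \<noteq> k\<close> unfolding pairs_def by auto
    qed
  qed
next
  fix p assume "p \<in> pairs J \<union> (\<lambda>j. (min j k, max j k)) ` J"
  then show "p \<in> pairs (insert k J)"
    using assms unfolding pairs_def by (auto simp: min_def max_def) (metis antisym_conv2)+
qed

lemma PP_insert:
  assumes "finite J" "k \<notin> J"
  shows "PP (insert k J) a b c x = fa a (x k - c) *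
     ((\<Prod>j\<in>J. fa a (x j - c) * fa b (x j - x k)) * (\<Prod>p\<in>pairs J. fa b (x (fst p) - x (snd p))))"
proof -
  have inj: "inj_on (\<lambda>j. (min j k, max j k)) J"
    using assms(2) by (auto simp: inj_on_def min_def max_def split: if_splits)
  have disj: "pairs J \<inter> (\<lambda>j. (min j k, max j k)) ` J = {}"
    using assms(2) unfolding pairs_def by (auto simp: min_def max_def split: if_splits)
  have "(\<Prod>p\<in>pairs (insert k J). fa b (x (fst p) - x (snd p))) =
     (\<Prod>p\<in>pairs J. fa b (x (fst p) - x (snd p))) * (\<Prod>p\<in>(\<lambda>j. (min j k, max j k)) ` J. fa b (x (fst p) - x (snd p)))"
    unfolding pairs_insert[OF assms(2)]
    by (rule prod.union_disjoint) (use assms disj in \<open>auto simp: finite_pairs\<close>)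
  also have "(\<Prod>p\<in>(\<lambda>j. (min j k, max j k)) ` J. fa b (x (fst p) - x (snd p))) = (\<Prod>j\<in>J. fa b (x j - x k))"
    by (subst prod.reindex[OF inj]) (auto intro!: prod.cong simp: min_def max_def fa_sym)
  finally show ?thesis
    unfolding PP_def using assms by (simp add: prod.distrib)
qed

lemma fa_j_bound:
  assumes "a \<ge> 0" "b \<ge> 0" "0 \<le> \<theta>" "\<theta> \<le> 1" "\<bar>xk - c\<bar> \<le> \<bar>xj - c\<bar>"
  shows "fa a (xj - c) * fa b (xj - xk) \<le>
         fa a (xk - c) powr \<theta> * (2 powr (a * (1 - \<theta>)) * 2 * fa (a * (1 - \<theta>) + b) (xj - xk))"
proof -
  have pos: "0 < fa a (xj - c)" by (rule fa_pos)
  have "fa a (xj - c) = fa a (xj - c) powr \<theta> * fa a (xj - c) powr (1 - \<theta>)"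
    using pos by (simp add: powr_add[symmetric])
  also have "\<dots> \<le> fa a (xk - c) powr \<theta> * ((2 powr a * fa a (xj - xk)) powr (1 - \<theta>))"
  proof (intro mult_mono powr_mono2)
    show "fa a (xj - c) \<le> fa a (xk - c)" using assms by (intro fa_mono) auto
    show "fa a (xj - c) \<le> 2 powr a * fa a (xj - xk)" using assms by (intro fa_tri) auto
  qed (use assms pos in auto)
  also have "(2 powr a * fa a (xj - xk)) powr (1 - \<theta>) = 2 powr (a * (1 - \<theta>)) * fa a (xj - xk) powr (1 - \<theta>)"
    by (simp add: powr_mult powr_powr less_imp_le[OF fa_pos])
  finally have h1: "fa a (xj - c) \<le> fa a (xk - c) powr \<theta> * (2 powr (a * (1 - \<theta>)) * fa a (xj - xk) powr (1 - \<theta>))" .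
  have h2: "fa a (xj - xk) powr (1 - \<theta>) * fa b (xj - xk) \<le> 2 * fa (a * (1 - \<theta>) + b) (xj - xk)"
    using assms by (intro fa_mix) auto
  have "fa a (xj - c) * fa b (xj - xk) \<le> fa a (xk - c) powr \<theta> * (2 powr (a * (1 - \<theta>)) * fa a (xj - xk) powr (1 - \<theta>)) * fa b (xj - xk)"
    using h1 by (intro mult_right_mono) (auto intro: less_imp_le fa_pos)
  also have "\<dots> = fa a (xk - c) powr \<theta> * 2 powr (a * (1 - \<theta>)) * (fa a (xj - xk) powr (1 - \<theta>) * fa b (xj - xk))"
    by (simp add: algebra_simps)
  also have "\<dots> \<le> fa a (xk - c) powr \<theta> * 2 powr (a * (1 - \<theta>)) * (2 * fa (a * (1 - \<theta>) + b) (xj - xk))"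
    using h2 by (intro mult_left_mono) auto
  finally show ?thesis by (simp add: algebra_simps)
qed

lemma PP_bound:
  assumes "finite J" "k \<notin> J" "a \<ge> 0" "b \<ge> 0" "0 \<le> \<theta>" "\<theta> \<le> 1"
    and min: "\<And>j. j \<in> J \<Longrightarrow> \<bar>x k - c\<bar> \<le> \<bar>x j - c\<bar>"
  shows "PP (insert k J) a b c x \<le> (2 powr (a * (1 - \<theta>)) * 2) ^ card J *
     fa a (x k - c) powr (1 + \<theta> * real (card J)) * PP J (a * (1 - \<theta>) + b) b (x k) x"
proof -
  let ?A = "fa a (x k - c) powr \<theta>" and ?B = "2 powr (a * (1 - \<theta>)) * 2"
  let ?a' = "a * (1 - \<theta>) + b"
  let ?Q = "\<Prod>p\<in>pairs J. fa b (x (fst p) - x (snd p))"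
  have Qnn: "0 \<le> ?Q" by (intro prod_nonneg) (auto intro: less_imp_le fa_pos)
  have "(\<Prod>j\<in>J. fa a (x j - c) * fa b (x j - x k)) \<le> (\<Prod>j\<in>J. ?A * (?B * fa ?a' (x j - x k)))"
    using assms by (intro prod_mono conjI fa_j_bound mult_nonneg_nonneg) (auto intro: less_imp_le fa_pos)
  also have "\<dots> = ?A ^ card J * ?B ^ card J * (\<Prod>j\<in>J. fa ?a' (x j - x k))"
    by (simp add: prod.distrib)
  also have "?A ^ card J = fa a (x k - c) powr (real (card J) * \<theta>)"
    using fa_pos[of a "x k - c"] by (simp add: powr_power)
  finally have h: "(\<Prod>j\<in>J. fa a (x j - c) * fa b (x j - x k)) \<le>
       fa a (x k - c) powr (real (card J) * \<theta>) * ?B ^ card J * (\<Prod>j\<in>J. fa ?a' (x j - x k))" .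
  have "PP (insert k J) a b c x = fa a (x k - c) * ((\<Prod>j\<in>J. fa a (x j - c) * fa b (x j - x k)) * ?Q)"
    using assms by (simp add: PP_insert)
  also have "\<dots> \<le> fa a (x k - c) * ((fa a (x k - c) powr (real (card J) * \<theta>) * ?B ^ card J * (\<Prod>j\<in>J. fa ?a' (x j - x k))) * ?Q)"
    using h Qnn by (intro mult_left_mono mult_right_mono) (auto intro: less_imp_le fa_pos)
  also have "\<dots> = ?B ^ card J * (fa a (x k - c) * fa a (x k - c) powr (real (card J) * \<theta>)) * PP J ?a' b (x k) x"
    unfolding PP_def by (simp add: algebra_simps)
  also have "fa a (x k - c) * fa a (x k - c) powr (real (card J) * \<theta>) = fa a (x k - c) powr (1 + \<theta> * real (card J))"
    using fa_pos[of a "x k - c"] by (simp add: powr_mult_base algebra_simps)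
  finally show ?thesis .
qed

lemma PP_meas2:
  assumes "J \<subseteq> I" "k \<in> I"
  shows "(\<lambda>x. PP J a b (x k) x) \<in> borel_measurable (PiM I (\<lambda>_. lborel))"
proof -
  have [measurable]: "k \<in> I" by fact
  have 1: "(\<lambda>x. \<Prod>j\<in>J. fa a (x j - x k)) \<in> borel_measurable (PiM I (\<lambda>_. lborel))"
  proof (rule borel_measurable_prod)
    fix j assume "j \<in> J"
    then have [measurable]: "j \<in> I" using assms by auto
    show "(\<lambda>x. fa a (x j - x k)) \<in> borel_measurable (PiM I (\<lambda>_. lborel))" by measurable
  qed
  have 2: "(\<lambda>x. \<Prod>p\<in>pairs J. fa b (x (fst p) - x (snd p))) \<in> borel_measurable (PiM I (\<lambda>_. lborel))"
  proof (rule borel_measurable_prod)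
    fix p assume "p \<in> pairs J"
    then have [measurable]: "fst p \<in> I" "snd p \<in> I" using assms unfolding pairs_def by auto
    show "(\<lambda>x. fa b (x (fst p) - x (snd p))) \<in> borel_measurable (PiM I (\<lambda>_. lborel))"
      by measurable
  qed
  show ?thesis unfolding PP_def using 1 2 by measurable
qed

lemma int_step:
  assumes J: "finite J" "k \<notin> J" and K: "K \<ge> 0" and "a \<ge> 0" "\<alpha> \<ge> 0" "a * \<alpha> > 1"
    and M: "M < \<infinity>" "\<And>c. (\<integral>\<^sup>+x. ennreal (PP J a' b c x) \<partial>PiM J (\<lambda>_. lborel)) \<le> M"
  shows "(\<integral>\<^sup>+x. ennreal (K * fa a (x k - c) powr \<alpha> * PP J a' b (x k) x) \<partial>PiM (insert k J) (\<lambda>_. lborel))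
          \<le> ennreal (K * 2) * (\<integral>\<^sup>+t. ennreal (fa (a * \<alpha>) t) \<partial>lborel) * M"
proof -
  interpret product_sigma_finite "\<lambda>_. lborel" by standard
  have meas: "(\<lambda>x. ennreal (K * fa a (x k - c) powr \<alpha> * PP J a' b (x k) x)) \<in> borel_measurable (PiM (insert k J) (\<lambda>_. lborel))"
  proof -
    have [measurable]: "k \<in> insert k J" by simp
    have [measurable]: "(\<lambda>x. PP J a' b (x k) x) \<in> borel_measurable (PiM (insert k J) (\<lambda>_. lborel))"
      by (rule PP_meas2) auto
    show ?thesis by measurable
  qed
  have "(\<integral>\<^sup>+x. ennreal (K * fa a (x k - c) powr \<alpha> * PP J a' b (x k) x) \<partial>PiM (insert k J) (\<lambda>_. lborel))
     = (\<integral>\<^sup>+t. (\<integral>\<^sup>+x. ennreal (K * fa a ((x(k:=t)) k - c) powr \<alpha> * PP J a' b ((x(k:=t)) k) (x(k:=t))) \<partial>PiM J (\<lambda>_. lborel)) \<partial>lborel)"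
    by (rule product_nn_integral_insert_rev[OF J meas])
  also have "\<dots> = (\<integral>\<^sup>+t. ennreal (K * fa a (t - c) powr \<alpha>) * (\<integral>\<^sup>+x. ennreal (PP J a' b t x) \<partial>PiM J (\<lambda>_. lborel)) \<partial>lborel)"
  proof (intro nn_integral_cong)
    fix t :: real
    have "(\<integral>\<^sup>+x. ennreal (K * fa a ((x(k:=t)) k - c) powr \<alpha> * PP J a' b ((x(k:=t)) k) (x(k:=t))) \<partial>PiM J (\<lambda>_. lborel))
        = (\<integral>\<^sup>+x. ennreal (K * fa a (t - c) powr \<alpha>) * ennreal (PP J a' b t x) \<partial>PiM J (\<lambda>_. lborel))"
      using J K by (intro nn_integral_cong) (simp add: PP_upd ennreal_mult' PP_nonneg)
    also have "\<dots> = ennreal (K * fa a (t - c) powr \<alpha>) * (\<integral>\<^sup>+x. ennreal (PP J a' b t x) \<partial>PiM J (\<lambda>_. lborel))"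
      by (rule nn_integral_cmult) measurable
    finally show "(\<integral>\<^sup>+x. ennreal (K * fa a ((x(k:=t)) k - c) powr \<alpha> * PP J a' b ((x(k:=t)) k) (x(k:=t))) \<partial>PiM J (\<lambda>_. lborel))
        = ennreal (K * fa a (t - c) powr \<alpha>) * (\<integral>\<^sup>+x. ennreal (PP J a' b t x) \<partial>PiM J (\<lambda>_. lborel))" .
  qed
  also have "\<dots> \<le> (\<integral>\<^sup>+t. ennreal (K * 2) * ennreal (fa (a * \<alpha>) (t - c)) * M \<partial>lborel)"
  proof (intro nn_integral_mono mult_mono)
    fix t :: real
    show "ennreal (K * fa a (t - c) powr \<alpha>) \<le> ennreal (K * 2) * ennreal (fa (a * \<alpha>) (t - c))"
      using mult_left_mono[OF fa_powr[of a \<alpha> "t - c"] K] assms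
      by (simp add: ennreal_mult'[symmetric] mult.assoc ennreal_leI)
  qed (use M in auto)
  also have "\<dots> = ennreal (K * 2) * (\<integral>\<^sup>+t. ennreal (fa (a * \<alpha>) (t - c)) \<partial>lborel) * M"
    by (simp add: nn_integral_multc nn_integral_cmult)
  also have "(\<integral>\<^sup>+t. ennreal (fa (a * \<alpha>) (t - c)) \<partial>lborel) = (\<integral>\<^sup>+t. ennreal (fa (a * \<alpha>) t) \<partial>lborel)"
    by (rule fa_shift) measurable
  finally show ?thesis .
qed

lemma theta_exists:
  fixes a b N :: real
  assumes N: "N \<ge> 1" and a: "a \<ge> 0" and b: "b \<ge> 0"
    and H1: "a + N * b / 2 > 1" and H2: "(N + 1) * a > 1"
  shows "\<exists>t. 0 \<le> t \<and> t \<le> a \<and> a + t * N > 1 \<and> a - t + b + (N - 1) * b / 2 > 1 \<and> N * (a - t + b) > 1"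
proof -
  define lo where "lo = max 0 ((1 - a) / N)"
  define hi where "hi = min a (min (a + (N + 1) * b / 2 - 1) (a + b - 1 / N))"
  have Npos: "N > 0" using N by simp
  have a0: "a > 0" using H2 N a by (cases "a = 0") auto
  have c1: "0 < a + (N + 1) * b / 2 - 1" using H1 b by (simp add: field_simps)
  have "N * a \<ge> a" "N * b \<ge> N * b / 2" using N a b Npos by (auto simp: mult_le_cancel_right1)
  then have "N * (a + b) > 1" using H1 by (simp add: algebra_simps)
  then have c2: "0 < a + b - 1 / N" using Npos by (simp add: field_simps)
  have c3: "(1 - a) / N < a" using Npos H2 by (simp add: field_simps)
  have "1 - a < N * (a + (N + 1) * b / 2 - 1)"
  proof -
    have "(N + 1) * 1 < (N + 1) * (a + N * b / 2)" using H1 Npos by (intro mult_strict_left_mono) auto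
    then show ?thesis by (simp add: algebra_simps)
  qed
  then have c4: "(1 - a) / N < a + (N + 1) * b / 2 - 1" using Npos by (simp add: field_simps)
  have "N * a \<ge> a" using N a by (simp add: mult_le_cancel_right1)
  then have "1 - a < N * (a + b) - 1" using H1 by (simp add: algebra_simps)
  moreover have "(a + b - 1 / N) * N = N * (a + b) - 1" using Npos by (simp add: field_simps)
  ultimately have c5: "(1 - a) / N < a + b - 1 / N" using Npos by (simp add: pos_divide_less_eq)
  have "lo < hi" unfolding lo_def hi_def using a0 c1 c2 c3 c4 c5 by simp
  then obtain t where t: "lo < t" "t < hi" using dense by blast
  have "a + t * N > 1"
  proof -
    have "(1 - a) / N < t" using t(1) lo_def by simp
    then show ?thesis using Npos by (simp add: field_simps)
  qed
  moreover have "a - t + b + (N - 1) * b / 2 > 1"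
    using t(2) hi_def by (simp add: field_simps)
  moreover have "N * (a - t + b) > 1"
  proof -
    have "t < a + b - 1 / N" using t(2) hi_def by simp
    then show ?thesis using Npos by (simp add: field_simps)
  qed
  ultimately show ?thesis using t lo_def hi_def by (intro exI[of _ t]) auto
qed

lemma pairs_empty: "pairs {k} = {}"
  by (auto simp: pairs_def)

lemma base_case:
  assumes "a > 1"
  shows "\<exists>M. M < \<infinity> \<and> (\<forall>c. (\<integral>\<^sup>+x. ennreal (PP {k} a b c x) \<partial>PiM {k} (\<lambda>_. lborel)) \<le> M)"
proof (intro exI conjI allI)
  interpret product_sigma_finite "\<lambda>_. lborel" by standard
  fix c :: real
  have "(\<integral>\<^sup>+x. ennreal (PP {k} a b c x) \<partial>PiM {k} (\<lambda>_. lborel)) = (\<integral>\<^sup>+x. ennreal (fa a (x k - c)) \<partial>PiM {k} (\<lambda>_. lborel))"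
    by (simp add: PP_def pairs_empty)
  also have "\<dots> = (\<integral>\<^sup>+t. ennreal (fa a (t - c)) \<partial>lborel)"
    by (rule product_nn_integral_singleton) measurable
  also have "\<dots> = (\<integral>\<^sup>+t. ennreal (fa a t) \<partial>lborel)"
    by (rule fa_shift) measurable
  finally show "(\<integral>\<^sup>+x. ennreal (PP {k} a b c x) \<partial>PiM {k} (\<lambda>_. lborel)) \<le> (\<integral>\<^sup>+t. ennreal (fa a t) \<partial>lborel)" by simp
qed (use fa_int assms in auto)

lemma main:
  assumes "finite I" "card I = n" "n \<ge> 1" "a \<ge> 0" "b \<ge> 0"
    "a + (real n - 1) * b / 2 > 1" "real n * a > 1"
  shows "\<exists>M. M < \<infinity> \<and> (\<forall>c. (\<integral>\<^sup>+x. ennreal (PP I a b c x) \<partial>PiM I (\<lambda>_. lborel)) \<le> M)"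
  using assms
proof (induction n arbitrary: I a b)
  case 0
  then show ?case by simp
next
  case (Suc n)
  show ?case
  proof (cases "n = 0")
    case True
    then obtain k where "I = {k}" using Suc.prems card_1_singletonE by auto
    then show ?thesis using base_case Suc.prems True by simp
  next
    case False
    define N where "N = real n"
    have N1: "N \<ge> 1" using False N_def by simp
    have H1: "a + N * b / 2 > 1" using Suc.prems N_def by simp
    have H2: "(N + 1) * a > 1" using Suc.prems N_def by (simp add: algebra_simps)
    obtain t where t: "0 \<le> t" "t \<le> a" "a + t * N > 1" "a - t + b + (N - 1) * b / 2 > 1" "N * (a - t + b) > 1"
      using theta_exists[OF N1 Suc.prems(4,5) H1 H2] by blast
    have a0: "a > 0" using H2 N1 Suc.prems(4) by (cases "a = 0") auto
    define \<theta> where "\<theta> = t / a"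
    have th: "0 \<le> \<theta>" "\<theta> \<le> 1" using t a0 by (auto simp: \<theta>_def field_simps)
    have at: "a * \<theta> = t" using a0 by (simp add: \<theta>_def)
    define a' where "a' = a * (1 - \<theta>) + b"
    have a'eq: "a' = a - t + b" using at by (simp add: a'_def algebra_simps)
    define \<alpha> where "\<alpha> = 1 + \<theta> * N"
    have alpha: "\<alpha> \<ge> 0" "a * \<alpha> > 1" using th t N1 at by (auto simp: \<alpha>_def algebra_simps)
    define K where "K = (2 powr (a * (1 - \<theta>)) * 2) ^ n"
    have K0: "K \<ge> 0" by (simp add: K_def)
    have "\<forall>k\<in>I. \<exists>M. M < \<infinity> \<and> (\<forall>c. (\<integral>\<^sup>+x. ennreal (PP (I - {k}) a' b c x) \<partial>PiM (I - {k}) (\<lambda>_. lborel)) \<le> M)"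
    proof
      fix k assume "k \<in> I"
      show "\<exists>M. M < \<infinity> \<and> (\<forall>c. (\<integral>\<^sup>+x. ennreal (PP (I - {k}) a' b c x) \<partial>PiM (I - {k}) (\<lambda>_. lborel)) \<le> M)"
      proof (rule Suc.IH)
        show "finite (I - {k})" using Suc.prems by simp
        show "card (I - {k}) = n" using Suc.prems \<open>k \<in> I\<close> by simp
        show "1 \<le> n" using False by simp
        show "0 \<le> a'" using a'eq t Suc.prems by simp
        show "0 \<le> b" by fact
        show "1 < a' + (real n - 1) * b / 2" using a'eq t N_def by simp
        show "1 < real n * a'" using a'eq t N_def by simp
      qed
    qed
    then obtain Mf where Mf0: "\<forall>k\<in>I. Mf k < \<infinity> \<and> (\<forall>c. (\<integral>\<^sup>+x. ennreal (PP (I - {k}) a' b c x) \<partial>PiM (I - {k}) (\<lambda>_. lborel)) \<le> Mf k)"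
      by (rule bchoice[THEN exE]) 
    have Mf: "\<And>k. k \<in> I \<Longrightarrow> Mf k < \<infinity>"
      "\<And>k c. k \<in> I \<Longrightarrow> (\<integral>\<^sup>+x. ennreal (PP (I - {k}) a' b c x) \<partial>PiM (I - {k}) (\<lambda>_. lborel)) \<le> Mf k"
      using Mf0 by auto
    define C where "C = (\<integral>\<^sup>+t. ennreal (fa (a * \<alpha>) t) \<partial>lborel)"
    have C: "C < \<infinity>" unfolding C_def using fa_int alpha by simp
    show ?thesis
    proof (intro exI conjI allI)
      show "(\<Sum>k\<in>I. ennreal (K * 2) * C * Mf k) < \<infinity>"
        using Mf(1) C Suc.prems(1) by (simp add: ennreal_mult_less_top)
      fix c :: real
      let ?T = "\<lambda>k x. ennreal (K * fa a (x k - c) powr \<alpha> * PP (I - {k}) a' b (x k) x)"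
      have "(\<integral>\<^sup>+x. ennreal (PP I a b c x) \<partial>PiM I (\<lambda>_. lborel)) \<le> (\<integral>\<^sup>+x. (\<Sum>k\<in>I. ?T k x) \<partial>PiM I (\<lambda>_. lborel))"
      proof (rule nn_integral_mono)
        fix x :: "nat \<Rightarrow> real"
        have Ine: "I \<noteq> {}" using Suc.prems by auto
        define m where "m = Min ((\<lambda>j. \<bar>x j - c\<bar>) ` I)"
        obtain k where k: "k \<in> I" "\<bar>x k - c\<bar> = m"
        proof -
          have "m \<in> (\<lambda>j. \<bar>x j - c\<bar>) ` I"
            unfolding m_def using Suc.prems Ine by (intro Min_in) auto
          then show ?thesis using that by auto
        qed
        have kmin: "\<bar>x k - c\<bar> \<le> \<bar>x j - c\<bar>" if "j \<in> I - {k}" for j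
          using that k Suc.prems unfolding m_def by (auto intro: Min_le)
        have Ik: "I = insert k (I - {k})" using k by auto
        have cardJ: "card (I - {k}) = n" using Suc.prems k by simp
        have "PP I a b c x = PP (insert k (I - {k})) a b c x" using Ik by simp
        also have "\<dots> \<le> (2 powr (a * (1 - \<theta>)) * 2) ^ card (I - {k}) *
            fa a (x k - c) powr (1 + \<theta> * real (card (I - {k}))) * PP (I - {k}) (a * (1 - \<theta>) + b) b (x k) x"
          by (rule PP_bound) (use Suc.prems th kmin in auto)
        also have "\<dots> = K * fa a (x k - c) powr \<alpha> * PP (I - {k}) a' b (x k) x"
          unfolding cardJ K_def \<alpha>_def a'_def N_def by simp
        finally have "ennreal (PP I a b c x) \<le> ?T k x" by (rule ennreal_leI)
        also have "\<dots> \<le> (\<Sum>k\<in>I. ?T k x)"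
          by (rule member_le_sum) (use k Suc.prems in auto)
        finally show "ennreal (PP I a b c x) \<le> (\<Sum>k\<in>I. ?T k x)" .
      qed
      also have "\<dots> = (\<Sum>k\<in>I. (\<integral>\<^sup>+x. ?T k x \<partial>PiM I (\<lambda>_. lborel)))"
      proof (rule nn_integral_sum)
        fix k assume k: "k \<in> I"
        then have [measurable]: "k \<in> I" .
        have [measurable]: "(\<lambda>x. PP (I - {k}) a' b (x k) x) \<in> borel_measurable (PiM I (\<lambda>_. lborel))"
          by (rule PP_meas2) (use k in auto)
        show "?T k \<in> borel_measurable (PiM I (\<lambda>_. lborel))" by measurable
      qed
      also have "\<dots> \<le> (\<Sum>k\<in>I. ennreal (K * 2) * C * Mf k)"
      proof (rule sum_mono)
        fix k assume k: "k \<in> I"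
        have Ik: "insert k (I - {k}) = I" using k by auto
        have "(\<integral>\<^sup>+x. ?T k x \<partial>PiM (insert k (I - {k})) (\<lambda>_. lborel)) \<le> ennreal (K * 2) * C * Mf k"
          unfolding C_def
          by (rule int_step) (use Suc.prems K0 alpha Mf k in auto)
        then show "(\<integral>\<^sup>+x. ?T k x \<partial>PiM I (\<lambda>_. lborel)) \<le> ennreal (K * 2) * C * Mf k"
          unfolding Ik .
      qed
      finally show "(\<integral>\<^sup>+x. ennreal (PP I a b c x) \<partial>PiM I (\<lambda>_. lborel)) \<le> (\<Sum>k\<in>I. ennreal (K * 2) * C * Mf k)" .
    qed
  qed
qed

theorem lemma2p18:
  fixes m :: nat and a b :: real
  assumes "a \<ge> 0" and "b \<ge> 0"
    and "a + (real m - 1) * b / 2 > 1" and "real m * a > 1"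
  shows "(\<integral>\<^sup>+ x. ennreal ((\<Prod>j<m. 1 / (1 + \<bar>x j\<bar> powr a)) *
            (\<Prod>(i, j) \<in> {(i, j). i < j \<and> j < m}. 1 / (1 + \<bar>x i - x j\<bar> powr b)))
          \<partial>(PiM {..<m} (\<lambda>_. lborel))) < \<infinity>"
proof -
  have m1: "m \<ge> 1" using assms(4) by (cases m) auto
  obtain M where M: "M < \<infinity>" "\<And>c. (\<integral>\<^sup>+x. ennreal (PP {..<m} a b c x) \<partial>PiM {..<m} (\<lambda>_. lborel)) \<le> M"
    using main[of "{..<m}" m a b] assms m1 by auto
  have pe: "pairs {..<m} = {(i, j). i < j \<and> j < m}" unfolding pairs_def by auto
  have "\<And>x. PP {..<m} a b 0 x = (\<Prod>j<m. 1 / (1 + \<bar>x j\<bar> powr a)) *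
            (\<Prod>(i, j) \<in> {(i, j). i < j \<and> j < m}. 1 / (1 + \<bar>x i - x j\<bar> powr b))"
    unfolding PP_def pe fa_def by (simp add: case_prod_beta)
  then have "(\<integral>\<^sup>+ x. ennreal ((\<Prod>j<m. 1 / (1 + \<bar>x j\<bar> powr a)) *
            (\<Prod>(i, j) \<in> {(i, j). i < j \<and> j < m}. 1 / (1 + \<bar>x i - x j\<bar> powr b)))
          \<partial>(PiM {..<m} (\<lambda>_. lborel))) = (\<integral>\<^sup>+x. ennreal (PP {..<m} a b 0 x) \<partial>PiM {..<m} (\<lambda>_. lborel))"
    by simp
  also have "\<dots> \<le> M" by (rule M(2))
  also have "\<dots> < \<infinity>" by (rule M(1))
  finally show ?thesis .
qed

end
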